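(* Fix $\alpha\in(0,1)$ and $\nu\in(0,\alpha)$, and let $y\sim P_\mu$. (i) (Inference on the winner.) Let $\hat\gamma=\arg\max_{\gamma\in[m]}y_\gamma$ (ties broken by any rule) and $\widehat\Gamma^+_\nu=\{\gamma\in[m]: y_\gamma\ge y_{\hat\gamma}-4q^{\nu}([m])\}$. Then $$P_\mu\left\{\mu_{\hat\gamma}\in\left(y_{\hat\gamma}\pm q^{(\alpha-\nu)}(\widehat\Gamma^+_\nu)\right)\right\}\ge1-\alpha.$$ (ii) (File-drawer problem.) For a fixed threshold $T\in\mathbb R$ let $\widehat\Gamma=\{\gamma\in[m]:y_\gamma\ge T\}$ and $\widehat\Gamma^+_\nu=\{\gamma\in[m]: y_\gamma\ge T-2q^\nu([m])\}$. Then $$P_\mu\left\{\mu_\gamma\in\left(y_\gamma\pm q^{(\alpha-\nu)}(\widehat\Gamma^+_\nu)\right),\ \forall\gamma\in\widehat\Gamma\right\}\ge1-\alpha.$$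
   Context: $\{P_\mu\}_{\mu\in\mathbb R^m}$ is a location family: $y=(y_1,\dots,y_m)\sim P_\mu$ means $y=\mu+Z$ with $Z=(Z_1,\dots,Z_m)\sim P_0$, where the $Z_i$ share a common marginal distribution that is symmetric with mean zero (the $Z_i$ need not be independent). For an index set $\mathcal I\subseteq[m]$ and $\beta\in(0,1)$, $$q^{\beta}(\mathcal I)=\inf\left\{q: P_0\left\{\max_{i\in\mathcal I}|Z_i|\le q\right\}\ge1-\beta\right\},$$ and for a data-dependent set $\widehat\Gamma^+_\nu$ the quantity $q^{(\alpha-\nu)}(\widehat\Gamma^+_\nu)$ is this function evaluated at the realized set. *)

theory Defs
  imports "HOL-Probability.Probability"
begin

text \<open>Index set [m] is the finite type 'm (m = CARD('m)); Z, y, mu are vectors real^'m.\<close>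

definition maxabs :: "'m::finite set \<Rightarrow> real^'m \<Rightarrow> real" where
  "maxabs I z = Max (insert 0 ((\<lambda>i. \<bar>z$i\<bar>) ` I))"

definition qtl :: "(real^'m::finite) measure \<Rightarrow> real \<Rightarrow> 'm set \<Rightarrow> real" where
  "qtl P0 \<beta> I = Inf {q. measure P0 {z \<in> space P0. maxabs I z \<le> q} \<ge> 1 - \<beta>}"

end

theory Submission imports Defs begin

lemma vn[measurable]: "(\<lambda>z::real^'m::finite. z$i) \<in> borel_measurable borel"
  by (intro borel_measurable_continuous_onI continuous_intros)
lemma ad[measurable]: "(\<lambda>z::real^'m::finite. \<mu> + z) \<in> borel \<rightarrow>\<^sub>M borel"
  by (intro borel_measurable_continuous_onI continuous_intros)
lemma gp:
  fixes g :: "real^'m::finite \<Rightarrow> 'm"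
  assumes "g \<in> borel \<rightarrow>\<^sub>M count_space UNIV"
  shows "Measurable.pred borel (\<lambda>z. g (\<mu>+z) = w)"
proof -
  have "(\<lambda>z. g(\<mu>+z)) \<in> borel \<rightarrow>\<^sub>M count_space UNIV"
    using measurable_compose[OF ad assms] by simp
  from measurable_sets[OF this, of "{w}"] show ?thesis
    unfolding pred_def by (simp add: vimage_def)
qed

lemma trans_sets:
  assumes "sets M = sets (borel :: (real^'m::finite) measure)" "Measurable.pred borel P"
  shows "{z \<in> space M. P z} \<in> sets M"
proof -
  have "space M = UNIV" using sets_eq_imp_space_eq[OF assms(1)] by simp
  then show ?thesis using assms unfolding pred_def by simp
qed

lemma space_M: "sets M = sets (borel :: (real^'m::finite) measure) \<Longrightarrow> space M = UNIV"
  using sets_eq_imp_space_eq by fastforce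

lemma maxabs_le: "maxabs I (z::real^'m::finite) \<le> q \<longleftrightarrow> 0 \<le> q \<and> (\<forall>i\<in>I. \<bar>z$i\<bar> \<le> q)"
  unfolding maxabs_def by (subst Max_le_iff) auto

lemma maxabs_ge: "i \<in> I \<Longrightarrow> \<bar>(z::real^'m::finite)$i\<bar> \<le> maxabs I z"
  using maxabs_le[of I z "maxabs I z"] by auto

lemma maxabs_sets:
  assumes "sets M = sets (borel :: (real^'m::finite) measure)"
  shows "{z \<in> space M. maxabs I z \<le> q} \<in> sets M"
  unfolding maxabs_le by (rule trans_sets[OF assms]) measurable

lemma qtl_props:
  fixes M :: "(real^'m::finite) measure"
  assumes P: "prob_space M" and S: "sets M = sets borel" and b: "0 < \<beta>" "\<beta> < 1"
  shows "measure M {z \<in> space M. maxabs I z \<le> qtl M \<beta> I} \<ge> 1 - \<beta>"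
    and "I \<subseteq> J \<Longrightarrow> qtl M \<beta> I \<le> qtl M \<beta> J"
proof -
  interpret prob_space M by fact
  define F where "F = (\<lambda>I q. measure M {z \<in> space M. maxabs I z \<le> q})"
  define Sb where "Sb = (\<lambda>I. {q. F I q \<ge> 1 - \<beta>})"
  have qtl_eq: "qtl M \<beta> I = Inf (Sb I)" for I unfolding qtl_def Sb_def F_def by simp
  have Fmono: "F J q \<le> F I q'" if "I \<subseteq> J" "q \<le> q'" for I J q q'
    unfolding F_def using that
    by (intro finite_measure_mono maxabs_sets[OF S]) (force simp: maxabs_le)
  have bdd: "bdd_below (Sb I)" for I
  proof
    fix q assume "q \<in> Sb I"
    show "0 \<le> q"
    proof (rule ccontr)
      assume "\<not> 0 \<le> q"
      then have "F I q = 0" unfolding F_def by (simp add: maxabs_le)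
      with \<open>q \<in> Sb I\<close> b show False unfolding Sb_def by simp
    qed
  qed
  have ne: "Sb I \<noteq> {}" for I
  proof -
    define A where "A = (\<lambda>n::nat. {z \<in> space M. maxabs UNIV z \<le> real n})"
    have "(\<lambda>n. measure M (A n)) \<longlonglongrightarrow> measure M (\<Union>n. A n)"
      apply (rule finite_Lim_measure_incseq)
      using maxabs_sets[OF S] apply (auto simp: A_def)[1]
      by (auto simp: A_def incseq_def)
    moreover have "(\<Union>n. A n) = space M"
    proof -
      have "\<exists>n::nat. maxabs UNIV z \<le> real n" for z by (rule real_arch_simple)
      then show ?thesis unfolding A_def by auto
    qed
    ultimately have "(\<lambda>n. measure M (A n)) \<longlonglongrightarrow> 1" by (simp add: prob_space)
    then have "eventually (\<lambda>n. measure M (A n) > 1 - \<beta>) sequentially"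
      using b by (intro order_tendstoD) auto
    then obtain n where "measure M (A n) > 1 - \<beta>" by (auto dest: eventually_happens)
    then have "F UNIV (real n) \<ge> 1 - \<beta>" unfolding A_def F_def by simp
    then have "F I (real n) \<ge> 1 - \<beta>" using Fmono[of I UNIV "real n" "real n"] by simp
    then show ?thesis unfolding Sb_def by auto
  qed
  show "measure M {z \<in> space M. maxabs I z \<le> qtl M \<beta> I} \<ge> 1 - \<beta>"
  proof -
    define q0 where "q0 = Inf (Sb I)"
    define B where "B = (\<lambda>n::nat. {z \<in> space M. maxabs I z \<le> q0 + 1 / Suc n})"
    have lim: "(\<lambda>n. measure M (B n)) \<longlonglongrightarrow> measure M (\<Inter>n. B n)"
      apply (rule finite_Lim_measure_decseq)
      using maxabs_sets[OF S] apply (auto simp: B_def)[1]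
      unfolding decseq_def B_def
      by (auto intro: order_trans simp: frac_le)
    have inter: "(\<Inter>n. B n) = {z \<in> space M. maxabs I z \<le> q0}"
    proof (intro equalityI subsetI)
      fix z assume zB: "z \<in> (\<Inter>n. B n)"
      then have zs: "z \<in> space M" and h: "\<And>n::nat. maxabs I z \<le> q0 + 1 / Suc n"
        by (auto simp: B_def)
      have "maxabs I z \<le> q0"
      proof (rule field_le_epsilon)
        fix e :: real assume "0 < e"
        then obtain n :: nat where "1 / Suc n < e" using nat_approx_posE by blast
        with h[of n] show "maxabs I z \<le> q0 + e" by linarith
      qed
      with zs show "z \<in> {z \<in> space M. maxabs I z \<le> q0}" by simp
    next
      fix z assume "z \<in> {z \<in> space M. maxabs I z \<le> q0}"
      moreover have "\<And>n::nat. 0 \<le> 1 / real (Suc n)" by simp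
      ultimately show "z \<in> (\<Inter>n. B n)" unfolding B_def by (auto intro: order_trans add_increasing2)
    qed
    have each: "measure M (B n) \<ge> 1 - \<beta>" for n
    proof -
      have "q0 < q0 + 1 / Suc n" by simp
      then obtain q where "q \<in> Sb I" "q < q0 + 1 / Suc n"
        unfolding q0_def using cInf_less_iff[OF ne bdd] by blast
      then have "F I q \<ge> 1 - \<beta>" unfolding Sb_def by simp
      also have "F I q \<le> F I (q0 + 1 / Suc n)" using Fmono \<open>q < _\<close> by simp
      finally show ?thesis unfolding F_def B_def by simp
    qed
    have "1 - \<beta> \<le> measure M (\<Inter>n. B n)"
      by (rule LIMSEQ_le_const[OF lim]) (use each in auto)
    then show ?thesis unfolding inter q0_def qtl_eq .
  qed
  show "qtl M \<beta> I \<le> qtl M \<beta> J" if "I \<subseteq> J"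
    unfolding qtl_eq
  proof (rule cInf_superset_mono[OF ne bdd])
    show "Sb J \<subseteq> Sb I" unfolding Sb_def using Fmono[OF that order_refl] by (auto intro: order_trans)
  qed
qed


lemma ex_set: "(\<exists>G\<in>UNIV. (\<forall>\<gamma>. (\<gamma> \<in> G) = P \<gamma>) \<and> R G) = R {\<gamma>. P \<gamma>}"
proof
  assume "\<exists>G\<in>UNIV. (\<forall>\<gamma>. (\<gamma> \<in> G) = P \<gamma>) \<and> R G"
  then obtain G where "\<forall>\<gamma>. (\<gamma> \<in> G) = P \<gamma>" "R G" by blast
  moreover from this(1) have "G = {\<gamma>. P \<gamma>}" by blast
  ultimately show "R {\<gamma>. P \<gamma>}" by simp
qed auto

lemma combine:
  assumes "prob_space M" "A \<in> sets M" "B \<in> sets M" "C \<in> sets M" "A \<inter> B \<subseteq> C"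
    "measure M A \<ge> 1 - a" "measure M B \<ge> 1 - b"
  shows "measure M C \<ge> 1 - a - b"
proof -
  interpret prob_space M by fact
  have "measure M (A \<union> B) = measure M A + measure M B - measure M (A \<inter> B)"
    using assms by (intro measure_Un3) (auto simp: fmeasurable_eq_sets)
  moreover have "measure M (A \<union> B) \<le> 1" by simp
  moreover have "measure M (A \<inter> B) \<le> measure M C"
    using assms by (intro finite_measure_mono) auto
  ultimately show ?thesis using assms by linarith
qed

theorem theorem2:
  fixes P0 :: "(real^'m::finite) measure" and \<alpha> \<nu> T :: real and \<mu> :: "real^'m"
    and g :: "real^'m \<Rightarrow> 'm"
  assumes "prob_space P0" and "sets P0 = sets borel"
    and "\<forall>i j. distr P0 borel (\<lambda>z. z$i) = distr P0 borel (\<lambda>z. z$j)"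
    and "\<forall>i. distr P0 borel (\<lambda>z. - (z$i)) = distr P0 borel (\<lambda>z. z$i)"
    and "\<forall>i. integrable P0 (\<lambda>z. z$i) \<and> (\<integral>z. z$i \<partial>P0) = 0"
    and "0 < \<alpha>" and "\<alpha> < 1" and "0 < \<nu>" and "\<nu> < \<alpha>"
    and "\<forall>y j. y$j \<le> y$(g y)"
    and "g \<in> borel \<rightarrow>\<^sub>M count_space UNIV"
  shows "measure P0 {z \<in> space P0.
            let y = \<mu> + z; w = g y;
                G = {\<gamma>. y$\<gamma> \<ge> y$w - 4 * qtl P0 \<nu> UNIV}
            in \<bar>\<mu>$w - y$w\<bar> \<le> qtl P0 (\<alpha> - \<nu>) G} \<ge> 1 - \<alpha>
       \<and> measure P0 {z \<in> space P0.
            let y = \<mu> + z;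
                G = {\<gamma>. y$\<gamma> \<ge> T - 2 * qtl P0 \<nu> UNIV}
            in \<forall>\<gamma>. y$\<gamma> \<ge> T \<longrightarrow> \<bar>\<mu>$\<gamma> - y$\<gamma>\<bar> \<le> qtl P0 (\<alpha> - \<nu>) G} \<ge> 1 - \<alpha>"
proof -
  note P = assms(1) and S = assms(2) and gmax = assms(10) and gm = assms(11)
  define Q where "Q = qtl P0 \<nu> UNIV"
  define h where "h = (\<lambda>G. qtl P0 (\<alpha> - \<nu>) G)"
  have b1: "0 < \<nu>" "\<nu> < 1" and b2: "0 < \<alpha> - \<nu>" "\<alpha> - \<nu> < 1" using assms(6-9) by auto
  define E where "E = {z \<in> space P0. maxabs UNIV z \<le> Q}"
  have Es: "E \<in> sets P0" unfolding E_def by (rule maxabs_sets[OF S])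
  have Em: "measure P0 E \<ge> 1 - \<nu>" unfolding E_def Q_def by (rule qtl_props(1)[OF P S b1])
  have Ez: "0 \<le> Q \<and> (\<forall>i. \<bar>z$i\<bar> \<le> Q)" if "z \<in> E" for z
    using that unfolding E_def maxabs_le by auto
  have hmono: "h I \<le> h J" if "I \<subseteq> J" for I J
    unfolding h_def by (rule qtl_props(2)[OF P S b2 that])
  have sp: "space P0 = UNIV" using space_M[OF S] .
  define \<Gamma>1 where "\<Gamma>1 = {\<gamma>. \<forall>j. \<mu>$\<gamma> \<ge> \<mu>$j - 2 * Q}"
  define B1 where "B1 = {z \<in> space P0. maxabs \<Gamma>1 z \<le> h \<Gamma>1}"
  have B1s: "B1 \<in> sets P0" unfolding B1_def by (rule maxabs_sets[OF S])
  have B1m: "measure P0 B1 \<ge> 1 - (\<alpha> - \<nu>)" unfolding B1_def h_def by (rule qtl_props(1)[OF P S b2])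
  define C1 where "C1 = {z \<in> space P0.
            let y = \<mu> + z; w = g y;
                G = {\<gamma>. y$\<gamma> \<ge> y$w - 4 * qtl P0 \<nu> UNIV}
            in \<bar>\<mu>$w - y$w\<bar> \<le> qtl P0 (\<alpha> - \<nu>) G}"
  have C1eq: "C1 = {z \<in> space P0. \<exists>w\<in>UNIV. g (\<mu>+z) = w \<and> (\<exists>G::'m set\<in>UNIV.
      (\<forall>\<gamma>. (\<gamma> \<in> G) = ((\<mu>+z)$\<gamma> \<ge> (\<mu>+z)$w - 4 * Q)) \<and> \<bar>\<mu>$w - (\<mu>+z)$w\<bar> \<le> h G)}"
    unfolding C1_def Let_def Q_def h_def ex_set by auto
  have C1s: "C1 \<in> sets P0"
    unfolding C1eq by (rule trans_sets[OF S]) (use gp[OF gm, measurable] in measurable)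
  have C1sub: "E \<inter> B1 \<subseteq> C1"
  proof
    fix z assume z: "z \<in> E \<inter> B1"
    define y where "y = \<mu> + z"
    define w where "w = g y"
    define G where "G = {\<gamma>. y$\<gamma> \<ge> y$w - 4 * Q}"
    have Q0: "0 \<le> Q" and zQ: "\<And>i. \<bar>z$i\<bar> \<le> Q" using Ez z by auto
    have yi: "y$i = \<mu>$i + z$i" for i unfolding y_def by simp
    have wmax: "y$j \<le> y$w" for j unfolding w_def using gmax by simp
    have wG: "w \<in> \<Gamma>1" unfolding \<Gamma>1_def
    proof (intro CollectI allI)
      fix j
      have "y$j \<le> y$w" by (rule wmax)
      then show "\<mu>$w \<ge> \<mu>$j - 2 * Q" using zQ[of j] zQ[of w] yi[of j] yi[of w] by linarith
    qed
    have sub: "\<Gamma>1 \<subseteq> G"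
    proof
      fix \<gamma> assume "\<gamma> \<in> \<Gamma>1"
      then have "\<mu>$\<gamma> \<ge> \<mu>$w - 2 * Q" unfolding \<Gamma>1_def by auto
      then show "\<gamma> \<in> G" unfolding G_def using zQ[of \<gamma>] zQ[of w] yi[of \<gamma>] yi[of w] by auto
    qed
    have "\<bar>\<mu>$w - y$w\<bar> = \<bar>z$w\<bar>" using yi[of w] by simp
    also have "\<dots> \<le> maxabs \<Gamma>1 z" by (rule maxabs_ge[OF wG])
    also have "\<dots> \<le> h \<Gamma>1" using z unfolding B1_def by simp
    also have "\<dots> \<le> h G" by (rule hmono[OF sub])
    finally have "\<bar>\<mu>$w - y$w\<bar> \<le> h G" .
    moreover have eq: "(let y = \<mu> + z; w = g y;
                G = {\<gamma>. y$\<gamma> \<ge> y$w - 4 * qtl P0 \<nu> UNIV}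
            in \<bar>\<mu>$w - y$w\<bar> \<le> qtl P0 (\<alpha> - \<nu>) G) = (\<bar>\<mu>$w - y$w\<bar> \<le> h G)"
      unfolding Let_def y_def w_def G_def Q_def h_def by simp
    ultimately show "z \<in> C1" unfolding C1_def
      apply (intro CollectI conjI)
       apply (simp add: sp)
      apply (subst eq) apply assumption
      done
  qed
  have part1: "measure P0 C1 \<ge> 1 - \<alpha>"
    using combine[OF P Es B1s C1s C1sub Em B1m] by simp
  define \<Gamma>2 where "\<Gamma>2 = {\<gamma>. \<mu>$\<gamma> \<ge> T - Q}"
  define B2 where "B2 = {z \<in> space P0. maxabs \<Gamma>2 z \<le> h \<Gamma>2}"
  have B2s: "B2 \<in> sets P0" unfolding B2_def by (rule maxabs_sets[OF S])
  have B2m: "measure P0 B2 \<ge> 1 - (\<alpha> - \<nu>)" unfolding B2_def h_def by (rule qtl_props(1)[OF P S b2])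
  define C2 where "C2 = {z \<in> space P0.
            let y = \<mu> + z;
                G = {\<gamma>. y$\<gamma> \<ge> T - 2 * qtl P0 \<nu> UNIV}
            in \<forall>\<gamma>. y$\<gamma> \<ge> T \<longrightarrow> \<bar>\<mu>$\<gamma> - y$\<gamma>\<bar> \<le> qtl P0 (\<alpha> - \<nu>) G}"
  have C2eq: "C2 = {z \<in> space P0. \<exists>G::'m set\<in>UNIV.
      (\<forall>\<gamma>. (\<gamma> \<in> G) = ((\<mu>+z)$\<gamma> \<ge> T - 2 * Q)) \<and>
      (\<forall>\<gamma>. (\<mu>+z)$\<gamma> \<ge> T \<longrightarrow> \<bar>\<mu>$\<gamma> - (\<mu>+z)$\<gamma>\<bar> \<le> h G)}"
    unfolding C2_def Let_def Q_def h_def ex_set by auto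
  have C2s: "C2 \<in> sets P0"
    unfolding C2eq by (rule trans_sets[OF S]) measurable
  have C2sub: "E \<inter> B2 \<subseteq> C2"
  proof
    fix z assume z: "z \<in> E \<inter> B2"
    define y where "y = \<mu> + z"
    define G where "G = {\<gamma>. y$\<gamma> \<ge> T - 2 * Q}"
    have Q0: "0 \<le> Q" and zQ: "\<And>i. \<bar>z$i\<bar> \<le> Q" using Ez z by auto
    have yi: "y$i = \<mu>$i + z$i" for i unfolding y_def by simp
    have sub: "\<Gamma>2 \<subseteq> G"
    proof
      fix \<gamma> assume "\<gamma> \<in> \<Gamma>2"
      then have "\<mu>$\<gamma> \<ge> T - Q" unfolding \<Gamma>2_def by auto
      then show "\<gamma> \<in> G" unfolding G_def using zQ[of \<gamma>] yi[of \<gamma>] by auto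
    qed
    have "\<forall>\<gamma>. y$\<gamma> \<ge> T \<longrightarrow> \<bar>\<mu>$\<gamma> - y$\<gamma>\<bar> \<le> h G"
    proof (intro allI impI)
      fix \<gamma> assume "y$\<gamma> \<ge> T"
      then have gG: "\<gamma> \<in> \<Gamma>2" unfolding \<Gamma>2_def using zQ[of \<gamma>] yi[of \<gamma>] by auto
      have "\<bar>\<mu>$\<gamma> - y$\<gamma>\<bar> = \<bar>z$\<gamma>\<bar>" using yi[of \<gamma>] by simp
      also have "\<dots> \<le> maxabs \<Gamma>2 z" by (rule maxabs_ge[OF gG])
      also have "\<dots> \<le> h \<Gamma>2" using z unfolding B2_def by simp
      also have "\<dots> \<le> h G" by (rule hmono[OF sub])
      finally show "\<bar>\<mu>$\<gamma> - y$\<gamma>\<bar> \<le> h G" .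
    qed
    moreover have eq: "(let y = \<mu> + z;
                G = {\<gamma>. y$\<gamma> \<ge> T - 2 * qtl P0 \<nu> UNIV}
            in \<forall>\<gamma>. y$\<gamma> \<ge> T \<longrightarrow> \<bar>\<mu>$\<gamma> - y$\<gamma>\<bar> \<le> qtl P0 (\<alpha> - \<nu>) G)
        = (\<forall>\<gamma>. y$\<gamma> \<ge> T \<longrightarrow> \<bar>\<mu>$\<gamma> - y$\<gamma>\<bar> \<le> h G)"
      unfolding Let_def y_def G_def Q_def h_def by simp
    ultimately show "z \<in> C2" unfolding C2_def
      apply (intro CollectI conjI)
       apply (simp add: sp)
      apply (subst eq) apply assumption
      done
  qed
  have part2: "measure P0 C2 \<ge> 1 - \<alpha>"
    using combine[OF P Es B2s C2s C2sub Em B2m] by simp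
  show ?thesis using part1 part2 unfolding C1_def C2_def by simp
qed

end
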